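(* Consider the partial-block protocol described in the context, on a finite set of agents $A$ with a connected undirected connectivity graph $G=(A,E)$ and block length $L$. If at some epoch $t$ a deadlock occurs, i.e. $D(i)$ holds for every $i\in A$, then for every edge $(i,j)\in E$ we have $\{i,j\}\subseteq pb_i^{(t)}$ (and symmetrically $\{i,j\}\subseteq pb_j^{(t)}$).
   Context: Let $A$ be a finite set of agents (agent IDs) and $G=(A,E)$ a connected undirected graph; $\Gamma_i$ denotes the set of neighbors of $i$. Fix an integer $L\ge 1$ (block length). Each agent $i$ maintains a partial block $pb_i\subseteq A$ (a set of agent IDs). The system runs in epochs $t=0,1,2,\dots$; $pb_i^{(t)}$ is agent $i$'s partial block at the start of epoch $t$. In each epoch: (C1) every agent $i$ with $i\notin pb_i$ adds $i$ to $pb_i$; (C2) every agent $i$ sends its $pb_i$ to every neighbor $j\in\Gamma_i$. When an agent $i$ receives a partial block $P$ (from a neighbor or via a direct message) it applies the rule: (R1) if $|P\setminus\{i\}|>|pb_i\setminus\{i\}|$, agent $i$ sets $pb_i:=P$; (R2) otherwise, if $|P\setminus\{i\}|=|pb_i\setminus\{i\}|$ and $P\neq pb_i$, agent $i$ sends its current $pb_i$ directly to every agent in $P\setminus pb_i$, each of which processes it by the same rule; (R3) otherwise the received block is discarded. All received partial blocks are assumed to pass all validity and similarity checks. For an agent $i$ and epoch $t$, the predicate $D(i)$ means: $pb_i^{(t)}=pb_i^{(t+1)}$ and $|pb_i^{(t)}|<L$. A deadlock at epoch $t$ means that $D(i)$ holds for all $i\in A$. *)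

theory Defs
  imports Main "HOL-Library.Multiset"
begin

definition Gamma :: "('a \<times> 'a) set \<Rightarrow> 'a \<Rightarrow> 'a set" where
  "Gamma E i = {j. (i, j) \<in> E}"

definition undirected_connected_graph :: "'a set \<Rightarrow> ('a \<times> 'a) set \<Rightarrow> bool" where
  "undirected_connected_graph A E \<longleftrightarrow>
     E \<subseteq> A \<times> A \<and> sym E \<and> irrefl E \<and> (\<forall>i\<in>A. \<forall>j\<in>A. (i, j) \<in> E\<^sup>*)"

(* A pending message: (recipient, partial block carried). *)
type_synonym 'a msg = "'a \<times> 'a set"

(* Agent k receives partial block P in local state pb: rules R1, R2, R3.
   Returns the new state and the multiset of newly sent direct messages. *)
definition receive :: "'a \<Rightarrow> 'a set \<Rightarrow> ('a \<Rightarrow> 'a set) \<Rightarrow> ('a \<Rightarrow> 'a set) \<times> 'a msg multiset" where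
  "receive k P pb =
     (if card (P - {k}) > card (pb k - {k}) then (pb(k := P), {#})
      else if card (P - {k}) = card (pb k - {k}) \<and> P \<noteq> pb k
        then (pb, mset_set ((\<lambda>m. (m, pb k)) ` (P - pb k)))
      else (pb, {#}))"

inductive msg_step :: "('a \<Rightarrow> 'a set) \<times> 'a msg multiset \<Rightarrow> ('a \<Rightarrow> 'a set) \<times> 'a msg multiset \<Rightarrow> bool" where
  "(k, P) \<in># M \<Longrightarrow> receive k P pb = (pb', N) \<Longrightarrow>
   msg_step (pb, M) (pb', M - {#(k, P)#} + N)"

definition after_C1 :: "'a set \<Rightarrow> ('a \<Rightarrow> 'a set) \<Rightarrow> 'a \<Rightarrow> 'a set" where
  "after_C1 A pb = (\<lambda>i. if i \<in> A then insert i (pb i) else pb i)"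

definition C2_msgs :: "'a set \<Rightarrow> ('a \<times> 'a) set \<Rightarrow> ('a \<Rightarrow> 'a set) \<Rightarrow> 'a msg multiset" where
  "C2_msgs A E pb = (\<Sum>i\<in>A. mset_set ((\<lambda>j. (j, pb i)) ` Gamma E i))"

(* One epoch: C1, then C2, then all messages (including those generated by R2)
   are delivered in some order until none is pending; pb' is the resulting state,
   i.e. the partial blocks at the start of the next epoch. *)
definition epoch :: "'a set \<Rightarrow> ('a \<times> 'a) set \<Rightarrow> ('a \<Rightarrow> 'a set) \<Rightarrow> ('a \<Rightarrow> 'a set) \<Rightarrow> bool" where
  "epoch A E pb pb' \<longleftrightarrow>
     msg_step\<^sup>*\<^sup>* (after_C1 A pb, C2_msgs A E (after_C1 A pb)) (pb', {#})"

(* The predicate D(i) at epoch t for the run pbs (pbs t i = pb_i^(t)). *)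
definition D :: "nat \<Rightarrow> (nat \<Rightarrow> 'a \<Rightarrow> 'a set) \<Rightarrow> nat \<Rightarrow> 'a \<Rightarrow> bool" where
  "D L pbs t i \<longleftrightarrow> pbs t i = pbs (Suc t) i \<and> card (pbs t i) < L"

definition deadlock :: "'a set \<Rightarrow> nat \<Rightarrow> (nat \<Rightarrow> 'a \<Rightarrow> 'a set) \<Rightarrow> nat \<Rightarrow> bool" where
  "deadlock A L pbs t \<longleftrightarrow> (\<forall>i\<in>A. D L pbs t i)"

end

theory Submission
  imports Defs
begin

lemma mem_sum_mset_iff:
  assumes "finite A"
  shows "x \<in># (\<Sum>i\<in>A. f i) \<longleftrightarrow> (\<exists>i\<in>A. x \<in># f i)"
  using assms by (induction A rule: finite_induct) auto

lemma mem_mset_set': "x \<in># mset_set S \<Longrightarrow> x \<in> S" by (cases "finite S") auto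
lemma mem_diff_single: "x \<in># M \<Longrightarrow> x \<noteq> y \<Longrightarrow> x \<in># M - {#y#}"
  by (simp add: in_diff_count)

lemma receive_cases:
  assumes "receive k P pb = (pb', N)"
  shows "(card (pb k - {k}) < card (P - {k}) \<and> pb' = pb(k := P) \<and> N = {#}) \<or>
         (\<not> card (pb k - {k}) < card (P - {k}) \<and> pb' = pb \<and>
          (N = {#} \<or> N = mset_set ((\<lambda>m. (m, pb k)) ` (P - pb k))))"
proof (cases "card (pb k - {k}) < card (P - {k})")
  case True
  then show ?thesis using assms unfolding receive_def by simp
next
  case False
  show ?thesis
  proof (cases "card (P - {k}) = card (pb k - {k}) \<and> P \<noteq> pb k")
    case True
    then show ?thesis using assms False unfolding receive_def by auto
  next
    case F2: False
    have "receive k P pb = (pb, {#})"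
      unfolding receive_def if_not_P[OF False] if_not_P[OF F2] ..
    then show ?thesis using assms False by simp
  qed
qed

definition Inv :: "'a set \<Rightarrow> ('a \<Rightarrow> 'a set) \<times> 'a msg multiset \<Rightarrow> bool" where
  "Inv A s \<longleftrightarrow> (\<forall>k\<in>A. fst s k \<subseteq> A) \<and> (\<forall>x\<in>#snd s. fst x \<in> A \<and> snd x \<subseteq> A)"

lemma Inv_step:
  assumes "msg_step s s'" "Inv A s"
  shows "Inv A s'"
  using assms(1)
proof cases
  case (1 k P M pb pb' N)
  have pbA: "\<forall>k\<in>A. pb k \<subseteq> A" using assms(2) 1 unfolding Inv_def by auto
  have MA: "\<forall>x\<in>#M. fst x \<in> A \<and> snd x \<subseteq> A" using assms(2) 1 unfolding Inv_def by auto
  have "fst (k, P) \<in> A \<and> snd (k, P) \<subseteq> A" using MA 1(3) by blast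
  then have kA: "k \<in> A" and PA: "P \<subseteq> A" by auto
  have "(\<forall>k\<in>A. pb' k \<subseteq> A) \<and> (\<forall>x\<in>#N. fst x \<in> A \<and> snd x \<subseteq> A)"
  proof (cases "card (P - {k}) > card (pb k - {k})")
    case True
    then have "pb' = pb(k := P)" "N = {#}" using receive_cases[OF 1(4)] by auto
    then show ?thesis using pbA PA by (auto split: if_split_asm)
  next
    case False
    have eq: "pb' = pb" using 1 False unfolding receive_def by (auto split: if_splits)
    have "N = {#} \<or> N = mset_set ((\<lambda>m. (m, pb k)) ` (P - pb k))"
      using 1 False unfolding receive_def by (auto split: if_splits)
    then have "\<forall>x\<in>#N. fst x \<in> A \<and> snd x \<subseteq> A"
    proof
      assume "N = mset_set ((\<lambda>m. (m, pb k)) ` (P - pb k))"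
      moreover have "pb k \<subseteq> A" using pbA kA by blast
      ultimately show ?thesis using PA kA by (auto dest!: mem_mset_set')
    qed simp
    then show ?thesis using eq pbA by simp
  qed
  moreover have "\<forall>x\<in>#M - {#(k, P)#}. fst x \<in> A \<and> snd x \<subseteq> A"
    using MA by (meson in_diffD)
  ultimately have pA: "\<forall>k\<in>A. pb' k \<subseteq> A"
    and MN: "\<forall>x\<in>#N. fst x \<in> A \<and> snd x \<subseteq> A"
    and MM: "\<forall>x\<in>#M - {#(k, P)#}. fst x \<in> A \<and> snd x \<subseteq> A"
    by blast+
  have X: "\<forall>x\<in>#(M - {#(k, P)#}) + N. fst x \<in> A \<and> snd x \<subseteq> A"
  proof
    fix x assume "x \<in># (M - {#(k, P)#}) + N"
    then have "x \<in># M - {#(k, P)#} \<or> x \<in># N" by (rule union_iff[THEN iffD1])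
    then show "fst x \<in> A \<and> snd x \<subseteq> A" using MN MM by blast
  qed
  have "Inv A (pb', M - {#(k, P)#} + N)" unfolding Inv_def fst_conv snd_conv using pA X by (rule conjI)
  then show ?thesis using 1(2) by (simp only:)
qed

lemma Inv_steps:
  assumes "msg_step\<^sup>*\<^sup>* s s'" "Inv A s"
  shows "Inv A s'"
  using assms(1)
proof (induction rule: rtranclp_induct)
  case base
  then show ?case using assms(2) .
next
  case (step y z)
  then show ?case using Inv_step by metis
qed

lemma mono_step:
  assumes "msg_step s s'"
  shows "fst s' k = fst s k \<or> card (fst s k - {k}) < card (fst s' k - {k})"
  using assms
proof cases
  case (1 k' P M pb pb' N)
  show ?thesis
  proof (cases "k' = k")
    case True
    from receive_cases[OF 1(4)] show ?thesis
    proof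
      assume h: "card (pb k' - {k'}) < card (P - {k'}) \<and> pb' = pb(k' := P) \<and> N = {#}"
      then have "pb' k = P" using True by simp
      moreover have "fst s' = pb'" "fst s = pb" using 1(1,2) by simp_all
      ultimately show ?thesis using h True by simp
    next
      assume h: "\<not> card (pb k' - {k'}) < card (P - {k'}) \<and> pb' = pb \<and>
          (N = {#} \<or> N = mset_set ((\<lambda>m. (m, pb k')) ` (P - pb k')))"
      moreover have "fst s' = pb'" "fst s = pb" using 1(1,2) by simp_all
      ultimately show ?thesis by simp
    qed
  next
    case False
    from receive_cases[OF 1(4)] have "pb' = pb(k' := P) \<or> pb' = pb" by blast
    then have "pb' k = pb k" using False by (metis fun_upd_other)
    moreover have "fst s' = pb'" "fst s = pb" using 1(1,2) by simp_all
    ultimately show ?thesis by simp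
  qed
qed

lemma mono_steps:
  assumes "msg_step\<^sup>*\<^sup>* s s'"
  shows "fst s' k = fst s k \<or> card (fst s k - {k}) < card (fst s' k - {k})"
  using assms
proof (induction rule: rtranclp_induct)
  case base
  then show ?case by simp
next
  case (step y z)
  let ?c = "\<lambda>x. card (x - {k})"
  from step(3) show ?case
  proof
    assume a: "fst y k = fst s k"
    from mono_step[OF step(2), of k] show ?case
    proof
      assume "fst z k = fst y k" then show ?case using a by (intro disjI1) (rule trans)
    next
      assume "?c (fst y k) < ?c (fst z k)" then show ?case using a by (intro disjI2) (simp only:)
    qed
  next
    assume a: "?c (fst s k) < ?c (fst y k)"
    from mono_step[OF step(2), of k] show ?case
    proof
      assume "fst z k = fst y k" then show ?case using a by (intro disjI2) (simp only:)
    next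
      assume "?c (fst y k) < ?c (fst z k)" then show ?case using a by (intro disjI2) (rule less_trans[OF a])
    qed
  qed
qed

lemma no_R1:
  assumes "msg_step\<^sup>*\<^sup>* s s'" "snd s' = {#}" "(k, P) \<in># snd s" "fst s' k = fst s k"
  shows "\<not> card (P - {k}) > card (fst s k - {k})"
  using assms
proof (induction arbitrary: P rule: converse_rtranclp_induct)
  case base
  then show ?case by simp
next
  case (step y z)
  from step(1) show ?case
  proof cases
    case (1 k' P' M pb pb' N)
    have mz: "fst z k = fst y k"
    proof (rule ccontr)
      assume "fst z k \<noteq> fst y k"
      then have "card (fst y k - {k}) < card (fst z k - {k})" using mono_step[OF step(1), of k] by auto
      moreover have "fst s' k = fst z k \<or> card (fst z k - {k}) < card (fst s' k - {k})"
        using mono_steps[OF step(2)] by auto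
      ultimately show False using step(6) by auto
    qed
    have fy: "fst y = pb" and sy: "snd y = M" using 1(1) by (simp_all only: fst_conv snd_conv)
    have fz: "fst z = pb'" and sz: "snd z = M - {#(k', P')#} + N" using 1(2)
      by (simp_all only: fst_conv snd_conv)
    show ?thesis
    proof (cases "(k, P) \<in># snd z")
      case True
      then show ?thesis using step(3)[OF step(4) True] mz step(6) by auto
    next
      case False
      have inM: "(k, P) \<in># M" using step(5) sy by (simp only:)
      have "(k, P) = (k', P')"
      proof (rule ccontr)
        assume ne: "(k, P) \<noteq> (k', P')"
        have "(k, P) \<in># M - {#(k', P')#}" using mem_diff_single[OF inM ne] .
        then have "(k, P) \<in># snd z" unfolding sz by (rule union_iff[THEN iffD2, OF disjI1])
        then show False using False by (simp only:)
      qed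
      then have kk: "k' = k" "P' = P" by auto
      have pk: "pb' k = pb k" using mz fy fz by (simp only:)
      from receive_cases[OF 1(4)] show ?thesis
      proof
        assume h: "card (pb k' - {k'}) < card (P' - {k'}) \<and> pb' = pb(k' := P') \<and> N = {#}"
        then have "pb' k = P" using kk by simp
        then show ?thesis using h kk pk by simp
      next
        assume h: "\<not> card (pb k' - {k'}) < card (P' - {k'}) \<and> pb' = pb \<and>
          (N = {#} \<or> N = mset_set ((\<lambda>m. (m, pb k')) ` (P' - pb k')))"
        then show ?thesis using kk fy by simp
      qed
    qed
  qed
qed

theorem lemma2:
  fixes A :: "'a set" and E :: "('a \<times> 'a) set" and L :: nat
    and pbs :: "nat \<Rightarrow> 'a \<Rightarrow> 'a set" and t :: nat
  assumes "finite A"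
    and "undirected_connected_graph A E"
    and "L \<ge> 1"
    and "\<forall>i\<in>A. pbs 0 i \<subseteq> A"
    and "\<forall>s\<le>t. epoch A E (pbs s) (pbs (Suc s))"
    and "deadlock A L pbs t"
  shows "\<forall>(i, j)\<in>E. {i, j} \<subseteq> pbs t i \<and> {i, j} \<subseteq> pbs t j"
proof -
  have G: "E \<subseteq> A \<times> A \<and> sym E \<and> irrefl E \<and> (\<forall>i\<in>A. \<forall>j\<in>A. (i, j) \<in> E\<^sup>*)"
    using assms(2) unfolding undirected_connected_graph_def .
  have EA: "E \<subseteq> A \<times> A" using G by (rule conjunct1)
  have symE: "sym E" using G by (elim conjE)
  have GA: "Gamma E i \<subseteq> A" for i using EA unfolding Gamma_def by auto
  have C1A: "\<forall>k\<in>A. after_C1 A pb k \<subseteq> A" if "\<forall>k\<in>A. pb k \<subseteq> A" for pb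
    using that unfolding after_C1_def by auto
  have initInv: "Inv A (after_C1 A pb, C2_msgs A E (after_C1 A pb))" if "\<forall>k\<in>A. pb k \<subseteq> A" for pb
  proof -
    have "\<forall>x\<in>#C2_msgs A E (after_C1 A pb). fst x \<in> A \<and> snd x \<subseteq> A"
    proof
      fix x assume "x \<in># C2_msgs A E (after_C1 A pb)"
      then have "\<exists>i\<in>A. x \<in># mset_set ((\<lambda>j. (j, after_C1 A pb i)) ` Gamma E i)"
        unfolding C2_msgs_def mem_sum_mset_iff[OF assms(1)] .
      then obtain i where iA: "i \<in> A" and x: "x \<in># mset_set ((\<lambda>j. (j, after_C1 A pb i)) ` Gamma E i)"
        by (rule bexE)
      have "finite (Gamma E i)" using GA assms(1) by (rule finite_subset)
      then have "x \<in> (\<lambda>j. (j, after_C1 A pb i)) ` Gamma E i" using x by simp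
      then obtain j where j: "j \<in> Gamma E i" and xj: "x = (j, after_C1 A pb i)" by blast
      have "j \<in> A" using GA j by blast
      moreover have "after_C1 A pb i \<subseteq> A" using C1A[OF that] iA by blast
      ultimately show "fst x \<in> A \<and> snd x \<subseteq> A" using xj by simp
    qed
    with C1A[OF that] show ?thesis unfolding Inv_def fst_conv snd_conv by (rule conjI)
  qed
  have allA: "s \<le> Suc t \<Longrightarrow> \<forall>k\<in>A. pbs s k \<subseteq> A" for s
  proof (induction s)
    case 0
    then show ?case using assms(4) by simp
  next
    case (Suc s)
    then have "\<forall>k\<in>A. pbs s k \<subseteq> A" by simp
    moreover have "epoch A E (pbs s) (pbs (Suc s))" using assms(5) Suc(2) by simp
    ultimately have "Inv A (pbs (Suc s), {#})" unfolding epoch_def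
      using Inv_steps initInv by blast
    then show ?case unfolding Inv_def by simp
  qed
  define pb where "pb = pbs t"
  define C where "C = after_C1 A pb"
  have run: "msg_step\<^sup>*\<^sup>* (C, C2_msgs A E C) (pbs (Suc t), {#})"
    using assms(5) unfolding epoch_def C_def pb_def by simp
  have same: "\<forall>k\<in>A. pbs (Suc t) k = pb k" using assms(6) unfolding deadlock_def D_def pb_def by auto
  have pbA: "\<forall>k\<in>A. pb k \<subseteq> A" using allA pb_def by simp
  have self: "k \<in> pb k" if kA: "k \<in> A" for k
  proof (rule ccontr)
    assume nk: "k \<notin> pb k"
    have Ck: "C k = insert k (pb k)" using kA unfolding C_def after_C1_def by simp
    have "pbs (Suc t) k = C k \<or> card (C k - {k}) < card (pbs (Suc t) k - {k})"
      using mono_steps[OF run, of k] by simp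
    then show False using same kA nk Ck by auto
  qed
  have Cpb: "C k = pb k" if "k \<in> A" for k
    using self[OF that] that unfolding C_def after_C1_def by auto
  have key: "\<not> card (pb j - {i}) > card (pb i - {i})" if ij: "(i, j) \<in> E" for i j
  proof -
    have iA: "i \<in> A" and jA: "j \<in> A" using ij EA by auto
    have "(j, i) \<in> E" using symE ij by (meson symD)
    then have iG: "i \<in> Gamma E j" unfolding Gamma_def by simp
    have "finite (Gamma E j)" using GA assms(1) by (rule finite_subset)
    then have "(i, C j) \<in># mset_set ((\<lambda>x. (x, C j)) ` Gamma E j)" using iG by simp
    then have "(i, C j) \<in># C2_msgs A E C" unfolding C2_msgs_def mem_sum_mset_iff[OF assms(1)]
      using jA by (rule bexI)
    then have m: "(i, C j) \<in># snd (C, C2_msgs A E C)" by simp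
    have e: "fst (pbs (Suc t), {#}::'a msg multiset) i = fst (C, C2_msgs A E C) i"
      using same Cpb iA by simp
    have "\<not> card (C j - {i}) > card (fst (C, C2_msgs A E C) i - {i})"
      using no_R1[OF run _ m e] by simp
    then show ?thesis using Cpb iA jA by simp
  qed
  show ?thesis
  proof (clarify)
    fix i j assume ij: "(i, j) \<in> E"
    have iA: "i \<in> A" and jA: "j \<in> A" using ij EA by auto
    have ji: "(j, i) \<in> E" using symE ij by (meson symD)
    have "pb i \<subseteq> A" "pb j \<subseteq> A" using pbA iA jA by blast+
    then have fi: "finite (pb i)" and fj: "finite (pb j)" using assms(1) by (blast intro: finite_subset)+
    have si: "i \<in> pb i" and sj: "j \<in> pb j" using self iA jA by auto
    have k1: "card (pb j - {i}) \<le> card (pb i - {i})" using key[OF ij] by simp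
    have k2: "card (pb i - {j}) \<le> card (pb j - {j})" using key[OF ji] by simp
    have ci: "card (pb i - {i}) = card (pb i) - 1" using si fi by simp
    have cj: "card (pb j - {j}) = card (pb j) - 1" using sj fj by simp
    have pi: "card (pb i) \<ge> 1" using si fi by (simp add: Suc_le_eq card_gt_0_iff) blast
    have pj: "card (pb j) \<ge> 1" using sj fj by (simp add: Suc_le_eq card_gt_0_iff) blast
    have "card (pb j) - 1 \<le> card (pb j - {i})" by (cases "i \<in> pb j") (simp_all add: fj)
    have "card (pb i) - 1 \<le> card (pb i - {j})" by (cases "j \<in> pb i") (simp_all add: fi)
    have ji_in: "j \<in> pb i"
    proof (rule ccontr)
      assume "j \<notin> pb i"
      then have "card (pb i - {j}) = card (pb i)" by simp
      then show False using k1 k2 ci cj pi pj \<open>card (pb j) - 1 \<le> card (pb j - {i})\<close> by linarith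
    qed
    have ij_in: "i \<in> pb j"
    proof (rule ccontr)
      assume "i \<notin> pb j"
      then have "card (pb j - {i}) = card (pb j)" by simp
      then show False using k1 k2 ci cj pi pj \<open>card (pb i) - 1 \<le> card (pb i - {j})\<close> by linarith
    qed
    show "{i, j} \<subseteq> pbs t i \<and> {i, j} \<subseteq> pbs t j"
      using si sj ji_in ij_in pb_def by auto
  qed
qed

end
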